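(* Let $\omega\ge 2$ and let $\Gamma$ be an $\omega$-clique regular finite simple graph with maximum degree $\Delta(\Gamma)$. Then every adjacency eigenvalue $\lambda$ of $C_\omega(\Gamma)$ satisfies \[-\omega\le\lambda\le\omega\left(\frac{\Delta(\Gamma)}{\omega-1}-1\right).\]
   Context: A graph is $\omega$-clique regular if it has a nonempty edge set and every edge lies in exactly one clique of order $\omega$. The $\omega$-clique graph $C_\omega(\Gamma)$ has as vertices the cliques of order $\omega$ of $\Gamma$, two distinct ones adjacent iff they have nonempty intersection. *)

theory Defs
  imports Main Complex_Main
begin

definition simple_graph :: "'a set \<Rightarrow> ('a \<Rightarrow> 'a \<Rightarrow> bool) \<Rightarrow> bool" where
  "simple_graph V E \<longleftrightarrow> finite V \<and> (\<forall>u v. E u v \<longrightarrow> u \<in> V \<and> v \<in> V)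
      \<and> (\<forall>u v. E u v \<longrightarrow> E v u) \<and> (\<forall>v. \<not> E v v)"

definition is_clique :: "'a set \<Rightarrow> ('a \<Rightarrow> 'a \<Rightarrow> bool) \<Rightarrow> 'a set \<Rightarrow> bool" where
  "is_clique V E K \<longleftrightarrow> K \<subseteq> V \<and> (\<forall>u\<in>K. \<forall>v\<in>K. u \<noteq> v \<longrightarrow> E u v)"

definition cliques_of_order :: "'a set \<Rightarrow> ('a \<Rightarrow> 'a \<Rightarrow> bool) \<Rightarrow> nat \<Rightarrow> 'a set set" where
  "cliques_of_order V E w = {K. is_clique V E K \<and> card K = w}"

definition clique_regular :: "'a set \<Rightarrow> ('a \<Rightarrow> 'a \<Rightarrow> bool) \<Rightarrow> nat \<Rightarrow> bool" where
  "clique_regular V E w \<longleftrightarrow> (\<exists>u v. E u v) \<and>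
     (\<forall>u v. E u v \<longrightarrow> (\<exists>!K. K \<in> cliques_of_order V E w \<and> u \<in> K \<and> v \<in> K))"

definition degree :: "'a set \<Rightarrow> ('a \<Rightarrow> 'a \<Rightarrow> bool) \<Rightarrow> 'a \<Rightarrow> nat" where
  "degree V E v = card {u \<in> V. E v u}"

definition max_degree :: "'a set \<Rightarrow> ('a \<Rightarrow> 'a \<Rightarrow> bool) \<Rightarrow> nat" where
  "max_degree V E = Max (degree V E ` V)"

definition clique_graph_adj :: "'a set \<Rightarrow> ('a \<Rightarrow> 'a \<Rightarrow> bool) \<Rightarrow> nat \<Rightarrow> 'a set \<Rightarrow> 'a set \<Rightarrow> bool" where
  "clique_graph_adj V E w K L \<longleftrightarrow> K \<in> cliques_of_order V E w \<and> L \<in> cliques_of_order V E w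
      \<and> K \<noteq> L \<and> K \<inter> L \<noteq> {}"

text \<open>Adjacency eigenvalue of a finite graph (vertex set W, adjacency R):
lambda is an eigenvalue of the 0/1 adjacency matrix A, i.e. A f = lambda f for some
nonzero f : W -> real (written out entrywise).\<close>
definition adj_eigenvalue :: "'b set \<Rightarrow> ('b \<Rightarrow> 'b \<Rightarrow> bool) \<Rightarrow> real \<Rightarrow> bool" where
  "adj_eigenvalue W R lam \<longleftrightarrow> (\<exists>f :: 'b \<Rightarrow> real. (\<exists>x\<in>W. f x \<noteq> 0) \<and>
      (\<forall>x\<in>W. (\<Sum>y\<in>{y\<in>W. R x y}. f y) = lam * f x))"

end

theory Submission
  imports Defs
begin

lemma inter_one:
  assumes cr: "clique_regular V E w"
    and K: "K \<in> cliques_of_order V E w" and L: "L \<in> cliques_of_order V E w"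
    and ne: "K \<noteq> L" and u: "u \<in> K \<inter> L" and v: "v \<in> K \<inter> L"
  shows "u = v"
proof (rule ccontr)
  assume "u \<noteq> v"
  then have "E u v" using K u v unfolding cliques_of_order_def is_clique_def by auto
  then have "\<exists>!K. K \<in> cliques_of_order V E w \<and> u \<in> K \<and> v \<in> K"
    using cr unfolding clique_regular_def by blast
  then show False using K L u v ne by blast
qed

lemma card_inter:
  assumes cr: "clique_regular V E w"
    and K: "K \<in> cliques_of_order V E w" and L: "L \<in> cliques_of_order V E w"
  shows "card (K \<inter> L) = (if K = L then w else if clique_graph_adj V E w K L then 1 else 0)"
proof (cases "K = L")
  case True then show ?thesis using K unfolding cliques_of_order_def by simp
next
  case False
  show ?thesis
  proof (cases "K \<inter> L = {}")
    case True then show ?thesis using False unfolding clique_graph_adj_def by simp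
  next
    case F2: False
    then obtain u where u: "u \<in> K \<inter> L" by blast
    have "K \<inter> L = {u}" using inter_one[OF cr K L False u] u by blast
    then show ?thesis using False F2 K L unfolding clique_graph_adj_def by simp
  qed
qed

lemma count_bound:
  assumes cr: "clique_regular V E w" and w2: "w \<ge> 2" and sg: "simple_graph V E"
    and vV: "v \<in> V"
  shows "card {L \<in> cliques_of_order V E w. v \<in> L} * (w - 1) \<le> degree V E v"
proof -
  let ?C = "cliques_of_order V E w"
  let ?I = "{L \<in> ?C. v \<in> L}"
  have finV: "finite V" using sg unfolding simple_graph_def by auto
  have finC: "finite ?C"
    by (rule finite_subset[of _ "Pow V"]) (auto simp: cliques_of_order_def is_clique_def finV)
  have finI: "finite ?I" using finC by simp
  have eq: "card (\<Union>L\<in>?I. L - {v}) = (\<Sum>L\<in>?I. card (L - {v}))"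
  proof (rule card_UN_disjoint)
    show "finite ?I" by (rule finI)
    show "\<forall>L\<in>?I. finite (L - {v})"
      using w2 by (auto simp: cliques_of_order_def intro: card_ge_0_finite)
    show "\<forall>L\<in>?I. \<forall>L'\<in>?I. L \<noteq> L' \<longrightarrow> (L - {v}) \<inter> (L' - {v}) = {}"
    proof (intro ballI impI)
      fix L L' assume L: "L \<in> ?I" and L': "L' \<in> ?I" and ne: "L \<noteq> L'"
      show "(L - {v}) \<inter> (L' - {v}) = {}"
      proof (rule ccontr)
        assume "(L - {v}) \<inter> (L' - {v}) \<noteq> {}"
        then obtain u where "u \<in> L \<inter> L'" "u \<noteq> v" by blast
        moreover have "v \<in> L \<inter> L'" using L L' by blast
        ultimately show False using inter_one[OF cr _ _ ne] L L' by blast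
      qed
    qed
  qed
  have s: "(\<Sum>L\<in>?I. card (L - {v})) = card ?I * (w - 1)"
  proof -
    have "\<And>L. L \<in> ?I \<Longrightarrow> card (L - {v}) = w - 1"
      using w2 by (auto simp: cliques_of_order_def intro: card_ge_0_finite)
    then show ?thesis by simp
  qed
  have sub: "(\<Union>L\<in>?I. L - {v}) \<subseteq> {u \<in> V. E v u}"
    by (auto simp: cliques_of_order_def is_clique_def)
  have "card (\<Union>L\<in>?I. L - {v}) \<le> card {u \<in> V. E v u}"
    by (rule card_mono) (use finV sub in auto)
  then show ?thesis using eq s unfolding degree_def by simp
qed

theorem corollary2:
  fixes V :: "'a set" and E :: "'a \<Rightarrow> 'a \<Rightarrow> bool" and w :: nat and lam :: real
  assumes "w \<ge> 2"
    and "simple_graph V E"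
    and "clique_regular V E w"
    and "adj_eigenvalue (cliques_of_order V E w) (clique_graph_adj V E w) lam"
  shows "- real w \<le> lam \<and> lam \<le> real w * (real (max_degree V E) / (real w - 1) - 1)"
proof -
  note w2 = assms(1) and sg = assms(2) and cr = assms(3)
  let ?C = "cliques_of_order V E w"
  let ?R = "clique_graph_adj V E w"
  obtain f :: "'a set \<Rightarrow> real" where fnz: "\<exists>x\<in>?C. f x \<noteq> 0"
    and eig: "\<And>x. x \<in> ?C \<Longrightarrow> (\<Sum>y\<in>{y\<in>?C. ?R x y}. f y) = lam * f x"
    using assms(4) unfolding adj_eigenvalue_def by blast
  have finV: "finite V" using sg unfolding simple_graph_def by auto
  have finC: "finite ?C"
    by (rule finite_subset[of _ "Pow V"]) (auto simp: cliques_of_order_def is_clique_def finV)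
  have CV: "\<And>x. x \<in> ?C \<Longrightarrow> x \<subseteq> V" by (auto simp: cliques_of_order_def is_clique_def)
  define S where "S = (\<Sum>x\<in>?C. f x * f x)"
  have Spos: "S > 0"
  proof -
    obtain x0 where "x0 \<in> ?C" "f x0 \<noteq> 0" using fnz by blast
    then have "0 < f x0 * f x0" by (metis not_real_square_gt_zero)
    also have "f x0 * f x0 \<le> S" unfolding S_def
      by (rule member_le_sum) (use \<open>x0 \<in> ?C\<close> finC in auto)
    finally show ?thesis .
  qed
  define Q where "Q = (\<Sum>x\<in>?C. \<Sum>y\<in>?C. if ?R x y then f x * f y else 0)"
  have Q: "Q = lam * S"
  proof -
    have "Q = (\<Sum>x\<in>?C. f x * (\<Sum>y\<in>{y\<in>?C. ?R x y}. f y))"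
      unfolding Q_def using finC
      by (simp add: sum.inter_filter sum_distrib_left if_distrib cong: if_cong)
    also have "\<dots> = (\<Sum>x\<in>?C. lam * (f x * f x))" by (rule sum.cong) (auto simp: eig)
    finally show ?thesis unfolding S_def by (simp add: sum_distrib_left)
  qed
  define P where "P = (\<Sum>v\<in>V. (\<Sum>x\<in>?C. if v \<in> x then f x else 0)\<^sup>2)"
  have P0: "P \<ge> 0" unfolding P_def by (rule sum_nonneg) simp
  have "P = (\<Sum>v\<in>V. \<Sum>x\<in>?C. \<Sum>y\<in>?C. if v \<in> x \<inter> y then f x * f y else 0)"
    unfolding P_def power2_eq_square sum_product
    by (rule sum.cong) (auto intro!: sum.cong)
  also have "\<dots> = (\<Sum>x\<in>?C. \<Sum>y\<in>?C. \<Sum>v\<in>V. if v \<in> x \<inter> y then f x * f y else 0)"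
    by (subst sum.swap) (simp add: sum.swap[of _ ?C V])
  also have "\<dots> = (\<Sum>x\<in>?C. \<Sum>y\<in>?C. f x * f y * real (card (x \<inter> y)))"
  proof (intro sum.cong refl)
    fix x y assume x: "x \<in> ?C" and y: "y \<in> ?C"
    have "{v \<in> V. v \<in> x \<inter> y} = x \<inter> y" using CV[OF x] by blast
    then show "(\<Sum>v\<in>V. if v \<in> x \<inter> y then f x * f y else 0) = f x * f y * real (card (x \<inter> y))"
      using finV by (simp add: sum.inter_filter[symmetric])
  qed
  also have "\<dots> = (\<Sum>x\<in>?C. \<Sum>y\<in>?C. (if ?R x y then f x * f y else 0) + (if x = y then real w * (f x * f y) else 0))"
    by (intro sum.cong refl) (auto simp: card_inter[OF cr] clique_graph_adj_def)
  also have "\<dots> = Q + real w * S"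
    unfolding Q_def S_def sum.distrib using finC by (simp add: sum_distrib_left)
  finally have "0 \<le> lam * S + real w * S" using P0 Q by simp
  then have "0 \<le> (lam + real w) * S" by (simp add: algebra_simps)
  then have low: "- real w \<le> lam" using Spos
    by (metis add.commute le_add_same_cancel1 neg_le_iff_le zero_le_mult_iff linorder_not_le less_eq_real_def minus_add_cancel add_le_cancel_left)
  define M where "M = Max ((\<lambda>x. \<bar>f x\<bar>) ` ?C)"
  have Cne: "?C \<noteq> {}" using fnz by blast
  have Mge: "\<And>x. x \<in> ?C \<Longrightarrow> \<bar>f x\<bar> \<le> M" unfolding M_def using finC by auto
  obtain x0 where x0: "x0 \<in> ?C" and Mx0: "M = \<bar>f x0\<bar>"
  proof -
    have "M \<in> (\<lambda>x. \<bar>f x\<bar>) ` ?C" unfolding M_def by (rule Max_in) (use finC Cne in auto)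
    then show ?thesis using that by auto
  qed
  have Mpos: "M > 0"
  proof -
    obtain x1 where "x1 \<in> ?C" "f x1 \<noteq> 0" using fnz by blast
    then have "0 < \<bar>f x1\<bar>" "\<bar>f x1\<bar> \<le> M" using Mge by auto
    then show ?thesis by linarith
  qed
  define N where "N = {y\<in>?C. ?R x0 y}"
  have finN: "finite N" unfolding N_def using finC by simp
  have "\<bar>lam\<bar> * M = \<bar>\<Sum>y\<in>N. f y\<bar>" using eig[OF x0] Mx0 unfolding N_def by (simp add: abs_mult)
  also have "\<dots> \<le> (\<Sum>y\<in>N. \<bar>f y\<bar>)" by (rule sum_abs)
  also have "\<dots> \<le> (\<Sum>y\<in>N. M)" by (rule sum_mono) (auto simp: N_def Mge)
  also have "\<dots> = real (card N) * M" by simp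
  finally have "\<bar>lam\<bar> \<le> real (card N)" using Mpos by simp
  then have l1: "lam \<le> real (card N)" by simp
  define A where "A v = {L \<in> ?C. v \<in> L \<and> L \<noteq> x0}" for v
  have "N \<subseteq> (\<Union>v\<in>x0. A v)" unfolding N_def A_def clique_graph_adj_def by blast
  have finx0: "finite x0" using x0 w2 by (auto simp: cliques_of_order_def intro: card_ge_0_finite)
  have cx0: "card x0 = w" using x0 by (simp add: cliques_of_order_def)
  have "card N \<le> card (\<Union>v\<in>x0. A v)"
    by (rule card_mono) (use finC \<open>N \<subseteq> _\<close> finx0 in \<open>auto simp: A_def\<close>)
  also have "\<dots> \<le> (\<Sum>v\<in>x0. card (A v))" by (rule card_UN_le[OF finx0])
  finally have l2: "real (card N) \<le> (\<Sum>v\<in>x0. real (card (A v)))" by (simp flip: of_nat_sum)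
  have l3: "real (card (A v)) \<le> real (max_degree V E) / (real w - 1) - 1" if v: "v \<in> x0" for v
  proof -
    have vV: "v \<in> V" using CV[OF x0] v by blast
    have "{L \<in> ?C. v \<in> L} = insert x0 (A v)" using x0 v unfolding A_def by blast
    moreover have "x0 \<notin> A v" unfolding A_def by blast
    moreover have "finite (A v)" unfolding A_def using finC by simp
    ultimately have c: "card {L \<in> ?C. v \<in> L} = card (A v) + 1" by simp
    have "degree V E v \<le> max_degree V E" unfolding max_degree_def using finV vV by simp
    then have "(card (A v) + 1) * (w - 1) \<le> max_degree V E"
      using count_bound[OF cr w2 sg vV] c by simp
    then have "(real (card (A v)) + 1) * (real w - 1) \<le> real (max_degree V E)"
    proof -
      have "real ((card (A v) + 1) * (w - 1)) \<le> real (max_degree V E)"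
        using \<open>(card (A v) + 1) * (w - 1) \<le> max_degree V E\<close> by (simp only: of_nat_le_iff)
      moreover have "real (w - 1) = real w - 1" using w2 by simp
      ultimately show ?thesis by (simp only: of_nat_mult of_nat_add of_nat_1)
    qed
    moreover have "real w - 1 > 0" using w2 by simp
    ultimately have "real (card (A v)) + 1 \<le> real (max_degree V E) / (real w - 1)"
      by (simp add: field_simps)
    then show ?thesis by simp
  qed
  have "(\<Sum>v\<in>x0. real (card (A v))) \<le> (\<Sum>v\<in>x0. real (max_degree V E) / (real w - 1) - 1)"
    by (rule sum_mono) (rule l3)
  also have "\<dots> = real w * (real (max_degree V E) / (real w - 1) - 1)" using cx0 by simp
  finally show ?thesis using low l1 l2 by linarith
qed

end
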